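(* Let $1\le p<\infty$, $N\ge2$, and for $1\le i\le N$ let $T_i=T_{f_i,\omega^{(i)}}$ be unilateral pseudo-shifts on $\ell^p(\mathbb{N})$ with maps $f_i$ and weights $\omega^{(i)}=(w^{(i)}_{f_i(m)})_m$, and $W^{(i)}_{m,n}=\prod_{\nu=1}^nw^{(i)}_{f_i^\nu(m)}$. Let $n,M\in\mathbb{N}$ and let $x_i=\sum_{m=1}^Ma^{(i)}_me_m$ ($1\le i\le N$) with $a^{(i)}_1,\dots,a^{(i)}_M\neq0$, and put $\Gamma=\max\{\|x_i\|:1\le i\le N\}$. Then there exists $z\in\operatorname{span}\{e_m:m\in\mathbb{N}\}$ such that $\|z\|\le MN\Gamma\max\{|W^{(\ell)}_{m,n}|^{-1}:1\le\ell\le N,\,1\le m\le M\}$, $\|T_1^nz-x_1\|\le MN\Gamma\max\left\{\left|\frac{W^{(1)}_{f_1^{-n}(j),n}}{W^{(\ell)}_{f_\ell^{-n}(j),n}}\right|:2\le\ell\le N,\ j\in f_\ell^n([M])\cap f_1^n(\mathbb{N}\setminus[M])\right\}$, and for each $2\le i\le N$, $\|T_i^nz-x_i\|\le MN\Gamma\max\left\{\left|\frac{W^{(i)}_{f_i^{-n}(j),n}}{W^{(\ell)}_{f_\ell^{-n}(j),n}}-\frac{a^{(i)}_{f_i^{-n}(j)}}{a^{(\ell)}_{f_\ell^{-n}(j)}}\right|:1\le\ell\le i-1,\ j\in f_\ell^n([M])\cap f_i^n([M])\right\}+MN\Gamma\max\left\{\left|\frac{W^{(i)}_{f_i^{-n}(j),n}}{W^{(\ell)}_{f_\ell^{-n}(j),n}}\right|:\ell\neq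 i,\ j\in f_\ell^n([M])\cap f_i^n(\mathbb{N}\setminus[M])\right\}$.
   Context: $\mathbb{N}=\{1,2,\dots\}$; $\{e_m\}$ is the canonical basis of $\ell^p(\mathbb{N})$ over $\mathbb{K}\in\{\mathbb{R},\mathbb{C}\}$. For a strictly increasing $f:\mathbb{N}\to\mathbb{N}$ with $f(1)>1$ and a bounded, nonzero sequence of scalars $\omega=(w_{f(m)})_{m\in\mathbb{N}}$, the unilateral pseudo-shift is $T_{f,\omega}(\sum_m\alpha_me_m)=\sum_mw_{f(m)}\alpha_{f(m)}e_m$. $[M]=\{1,\dots,M\}$, $f^n$ is the $n$-fold composition, $f(A)=\{f(m):m\in A\}$, $f^{-n}$ is the inverse of $f^n$ on $f^n(\mathbb{N})$. The maximum of an empty set is taken to be $0$. *)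

theory Defs
  imports "HOL-Analysis.Analysis"
begin

text \<open>Sequences on \<nat> = {1,2,...} are modelled as functions nat => 'a; index 0 is unused.\<close>

definition lp_norm :: "real \<Rightarrow> (nat \<Rightarrow> 'a::real_normed_vector) \<Rightarrow> real" where
  "lp_norm p x = (\<Sum>\<^sub>\<infinity> m\<in>{1..}. norm (x m) powr p) powr (1 / p)"

definition in_span_basis :: "(nat \<Rightarrow> 'a::zero) \<Rightarrow> bool" where
  "in_span_basis z \<longleftrightarrow> z 0 = 0 \<and> finite {m. z m \<noteq> 0}"

definition pseudo_shift :: "(nat \<Rightarrow> nat) \<Rightarrow> (nat \<Rightarrow> 'a::field) \<Rightarrow> (nat \<Rightarrow> 'a) \<Rightarrow> (nat \<Rightarrow> 'a)" where
  "pseudo_shift f w x = (\<lambda>m. if 1 \<le> m then w (f m) * x (f m) else 0)"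

definition pseudo_shift_data :: "(nat \<Rightarrow> nat) \<Rightarrow> (nat \<Rightarrow> 'a::real_normed_field) \<Rightarrow> bool" where
  "pseudo_shift_data f w \<longleftrightarrow> strict_mono_on {1..} f \<and> f 1 > 1 \<and>
     bounded ((\<lambda>m. w (f m)) ` {1..}) \<and> (\<forall>m\<ge>1. w (f m) \<noteq> 0)"

definition Wprod :: "(nat \<Rightarrow> nat) \<Rightarrow> (nat \<Rightarrow> 'a::comm_monoid_mult) \<Rightarrow> nat \<Rightarrow> nat \<Rightarrow> 'a" where
  "Wprod f w m n = (\<Prod>\<nu>=1..n. w ((f ^^ \<nu>) m))"

definition finv :: "(nat \<Rightarrow> nat) \<Rightarrow> nat \<Rightarrow> nat \<Rightarrow> nat" where
  "finv f n j = inv_into {1..} (f ^^ n) j"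

definition Max0 :: "real set \<Rightarrow> real" where
  "Max0 S = (if S = {} then 0 else Max S)"

end

theory Submission imports Defs begin

lemma lp_infsum_finite:
  fixes y :: "nat \<Rightarrow> 'a::real_normed_vector"
  assumes "finite S" "S \<subseteq> {1..}" "\<And>k. k \<ge> 1 \<Longrightarrow> k \<notin> S \<Longrightarrow> y k = 0" "p \<noteq> 0"
  shows "(\<Sum>\<^sub>\<infinity> m\<in>{1..}. norm (y m) powr p) = (\<Sum>m\<in>S. norm (y m) powr p)"
proof -
  have "(\<Sum>\<^sub>\<infinity> m\<in>{1..}. norm (y m) powr p) = (\<Sum>\<^sub>\<infinity> m\<in>S. norm (y m) powr p)"
    by (rule infsum_cong_neutral) (use assms in auto)
  also have "\<dots> = (\<Sum>m\<in>S. norm (y m) powr p)" using assms(1) by simp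
  finally show ?thesis .
qed

lemma lp_bound:
  fixes y :: "nat \<Rightarrow> 'a::real_normed_vector"
  assumes p: "1 \<le> p" and fin: "finite S" and S1: "S \<subseteq> {1..}" and cS: "card S \<le> K"
    and z: "\<And>k. k \<ge> 1 \<Longrightarrow> k \<notin> S \<Longrightarrow> y k = 0"
    and b: "\<And>k. k \<in> S \<Longrightarrow> norm (y k) \<le> c" and c: "0 \<le> c"
  shows "lp_norm p y \<le> real K * c"
proof -
  have e: "lp_norm p y = (\<Sum>m\<in>S. norm (y m) powr p) powr (1/p)"
    unfolding lp_norm_def using lp_infsum_finite[OF fin S1 z] p by simp
  have "(\<Sum>m\<in>S. norm (y m) powr p) \<le> (\<Sum>m\<in>S. c powr p)"
    by (rule sum_mono) (use b p in \<open>auto intro: powr_mono2\<close>)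
  also have "\<dots> = real (card S) * c powr p" by simp
  also have "\<dots> \<le> real K * c powr p" using cS by (simp add: mult_right_mono)
  finally have le1: "(\<Sum>m\<in>S. norm (y m) powr p) \<le> real K * c powr p" .
  have "lp_norm p y \<le> (real K * c powr p) powr (1/p)"
    unfolding e by (rule powr_mono2[OF _ _ le1]) (use p in \<open>auto intro: sum_nonneg\<close>)
  also have "\<dots> = real K powr (1/p) * c"
    using p c by (simp add: powr_mult powr_powr)
  also have "\<dots> \<le> real K * c"
  proof (cases "K = 0")
    case False
    then have "real K powr (1/p) \<le> real K powr 1"
      by (intro powr_mono) (use p in auto)
    then show ?thesis using c by (simp add: mult_right_mono)
  qed simp
  finally show ?thesis .
qed

lemma norm_le_lp:
  fixes y :: "nat \<Rightarrow> 'a::real_normed_vector"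
  assumes p: "1 \<le> p" and fin: "finite S" and S1: "S \<subseteq> {1..}"
    and z: "\<And>k. k \<ge> 1 \<Longrightarrow> k \<notin> S \<Longrightarrow> y k = 0" and k: "k \<in> S"
  shows "norm (y k) \<le> lp_norm p y"
proof -
  have e: "lp_norm p y = (\<Sum>m\<in>S. norm (y m) powr p) powr (1/p)"
    unfolding lp_norm_def using lp_infsum_finite[OF fin S1 z] p by simp
  have le1: "norm (y k) powr p \<le> (\<Sum>m\<in>S. norm (y m) powr p)"
    by (rule member_le_sum) (use fin k in auto)
  have "(norm (y k) powr p) powr (1/p) \<le> (\<Sum>m\<in>S. norm (y m) powr p) powr (1/p)"
    by (rule powr_mono2[OF _ _ le1]) (use p in auto)
  moreover have "(norm (y k) powr p) powr (1/p) = norm (y k)"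
    using p by (cases "y k = 0") (auto simp: powr_powr)
  ultimately show ?thesis using e by simp
qed

lemma fin_gen:
  assumes "finite L" "finite U" "\<And>l j. Q l j \<Longrightarrow> l \<in> L \<and> j \<in> U"
  shows "finite {F l j | l j. Q l j}"
  by (rule finite_subset[of _ "(\<lambda>(l,j). F l j) ` (L \<times> U)"]) (use assms in auto)

lemma fin_gen2:
  assumes "finite L" "finite U" "\<And>l j. Q l j \<Longrightarrow> l \<in> L" "\<And>l j. Q l j \<Longrightarrow> j \<in> h l"
    "\<And>l. l \<in> L \<Longrightarrow> h l \<subseteq> U"
  shows "finite {F l j | l j. Q l j}"
  by (rule fin_gen[OF assms(1,2)]) (use assms in blast)

lemma Max0_ge: "finite S \<Longrightarrow> e \<in> S \<Longrightarrow> e \<le> Max0 S"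
  unfolding Max0_def by auto

lemma Max0_nonneg: "(\<And>e. e \<in> S \<Longrightarrow> 0 \<le> e) \<Longrightarrow> finite S \<Longrightarrow> 0 \<le> Max0 S"
  unfolding Max0_def by (cases "S = {}") (auto intro: order.trans[OF _ Max_ge])

lemma funpow_props:
  fixes f :: "nat \<Rightarrow> nat"
  assumes "strict_mono_on {1..} f" "\<And>m. m \<ge> 1 \<Longrightarrow> f m \<ge> (1::nat)"
  shows "strict_mono_on {1..} (f^^n) \<and> (\<forall>m\<ge>1. (f^^n) m \<ge> 1)"
proof (induction n)
  case 0 then show ?case by (simp add: strict_mono_on_def funpow_0)
next
  case (Suc n)
  then show ?case using assms by (auto simp: strict_mono_on_def)
qed

lemma shift_pow:
  assumes "\<And>m. m \<ge> 1 \<Longrightarrow> f m \<ge> (1::nat)" "m \<ge> 1"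
  shows "(pseudo_shift f w ^^ n) z m = Wprod f w m n * z ((f^^n) m)"
  using assms(2)
proof (induction n arbitrary: m)
  case 0 then show ?case by (simp add: Wprod_def)
next
  case (Suc n)
  have "(pseudo_shift f w ^^ Suc n) z m = w (f m) * (pseudo_shift f w ^^ n) z (f m)"
    using Suc by (simp add: pseudo_shift_def)
  also have "\<dots> = w (f m) * (Wprod f w (f m) n * z ((f^^n) (f m)))"
    using Suc assms(1) by simp
  also have "Wprod f w (f m) n = (\<Prod>\<nu>=2..Suc n. w ((f ^^ \<nu>) m))"
    unfolding Wprod_def
    by (rule prod.reindex_bij_witness[of _ "\<lambda>i. i - 1" Suc]) (auto simp: funpow_swap1)
  finally have a: "(pseudo_shift f w ^^ Suc n) z m = w (f m) * (\<Prod>\<nu>=2..Suc n. w ((f ^^ \<nu>) m)) * z ((f ^^ n) (f m))"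
    by (simp add: mult.assoc)
  have b: "w (f m) * (\<Prod>\<nu>=2..Suc n. w ((f ^^ \<nu>) m)) = Wprod f w m (Suc n)"
    unfolding Wprod_def by (subst prod.atLeast_Suc_atMost[of 1]) (auto simp: numeral_2_eq_2)
  show ?case unfolding a b by (simp add: funpow_swap1)
qed

lemma Wprod_nz:
  assumes "\<And>m. m \<ge> 1 \<Longrightarrow> f m \<ge> (1::nat)" "\<And>m. m \<ge> 1 \<Longrightarrow> w (f m) \<noteq> (0::'a::field)"
    "strict_mono_on {1..} f" "m \<ge> 1"
  shows "Wprod f w m n \<noteq> 0"
  unfolding Wprod_def
proof (rule ccontr)
  assume "\<not> (\<Prod>\<nu> = 1..n. w ((f ^^ \<nu>) m)) \<noteq> 0"
  then obtain \<nu> where "1 \<le> \<nu>" "\<nu> \<le> n" "w ((f ^^ \<nu>) m) = 0" by auto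
  then obtain k where "\<nu> = Suc k" by (cases \<nu>) auto
  have "(f^^k) m \<ge> 1" using funpow_props[OF assms(3,1)] assms(4) by blast
  then show False using assms(2)[of "(f^^k) m"] \<open>w ((f ^^ \<nu>) m) = 0\<close> \<open>\<nu> = Suc k\<close> by simp
qed


theorem lemma2p5:
  fixes p :: real and N n M :: nat
    and f :: "nat \<Rightarrow> nat \<Rightarrow> nat" and w :: "nat \<Rightarrow> nat \<Rightarrow> 'a::real_normed_field"
    and x :: "nat \<Rightarrow> nat \<Rightarrow> 'a"
  assumes p: "1 \<le> p" and N: "2 \<le> N" and n: "1 \<le> n" and M: "1 \<le> M"
    and data: "\<And>i. i \<in> {1..N} \<Longrightarrow> pseudo_shift_data (f i) (w i)"
    and xnz: "\<And>i m. i \<in> {1..N} \<Longrightarrow> m \<in> {1..M} \<Longrightarrow> x i m \<noteq> 0"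
    and xsupp: "\<And>i m. i \<in> {1..N} \<Longrightarrow> m \<notin> {1..M} \<Longrightarrow> x i m = 0"
  shows "\<exists>z. in_span_basis z \<and>
    lp_norm p z \<le> real M * real N * Max ((\<lambda>i. lp_norm p (x i)) ` {1..N}) *
       Max0 {inverse (norm (Wprod (f l) (w l) m n)) | l m. l \<in> {1..N} \<and> m \<in> {1..M}} \<and>
    lp_norm p (\<lambda>k. (pseudo_shift (f 1) (w 1) ^^ n) z k - x 1 k) \<le>
       real M * real N * Max ((\<lambda>i. lp_norm p (x i)) ` {1..N}) *
       Max0 {norm (Wprod (f 1) (w 1) (finv (f 1) n j) n / Wprod (f l) (w l) (finv (f l) n j) n) | l j.
              l \<in> {2..N} \<and> j \<in> (f l ^^ n) ` {1..M} \<inter> (f 1 ^^ n) ` ({1..} - {1..M})} \<and>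
    (\<forall>i\<in>{2..N}.
      lp_norm p (\<lambda>k. (pseudo_shift (f i) (w i) ^^ n) z k - x i k) \<le>
       real M * real N * Max ((\<lambda>i. lp_norm p (x i)) ` {1..N}) *
       Max0 {norm (Wprod (f i) (w i) (finv (f i) n j) n / Wprod (f l) (w l) (finv (f l) n j) n
                  - x i (finv (f i) n j) / x l (finv (f l) n j)) | l j.
              l \<in> {1..i-1} \<and> j \<in> (f l ^^ n) ` {1..M} \<inter> (f i ^^ n) ` {1..M}}
       + real M * real N * Max ((\<lambda>i. lp_norm p (x i)) ` {1..N}) *
       Max0 {norm (Wprod (f i) (w i) (finv (f i) n j) n / Wprod (f l) (w l) (finv (f l) n j) n) | l j.
              l \<in> {1..N} \<and> l \<noteq> i \<and> j \<in> (f l ^^ n) ` {1..M} \<inter> (f i ^^ n) ` ({1..} - {1..M})})"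
proof -
  define g where "g i = f i ^^ n" for i
  define U where "U = (\<Union>i\<in>{1..N}. g i ` {1..M})"
  define P where "P j = {i\<in>{1..N}. j \<in> g i ` {1..M}}" for j
  define z where "z j = (if j \<in> U then x (Min (P j)) (finv (f (Min (P j))) n j) /
       Wprod (f (Min (P j))) (w (Min (P j))) (finv (f (Min (P j))) n j) n else 0)" for j
  define G where "G = Max ((\<lambda>i. lp_norm p (x i)) ` {1..N})"
  have smono: "strict_mono_on {1..} (f i)" if "i \<in> {1..N}" for i
    using data[OF that] by (simp add: pseudo_shift_data_def)
  have fge: "1 \<le> f i m" if "i \<in> {1..N}" "1 \<le> m" for i m
  proof -
    have "f i 1 \<le> f i m" using smono[OF that(1)] that(2)
      by (cases "m = 1") (auto simp: strict_mono_on_def intro: less_imp_le)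
    then show ?thesis using data[OF that(1)] by (simp add: pseudo_shift_data_def)
  qed
  have wnz: "w i (f i m) \<noteq> 0" if "i \<in> {1..N}" "1 \<le> m" for i m
    using data[OF that(1)] that(2) by (simp add: pseudo_shift_data_def)
  have gp: "strict_mono_on {1..} (g i) \<and> (\<forall>m\<ge>1. g i m \<ge> 1)" if "i \<in> {1..N}" for i
    unfolding g_def by (rule funpow_props[OF smono[OF that] fge[OF that]])
  have ginj: "inj_on (g i) {1..}" if "i \<in> {1..N}" for i
    using gp[OF that] strict_mono_on_imp_inj_on by blast
  have finvg: "finv (f i) n (g i k) = k" if "i \<in> {1..N}" "1 \<le> k" for i k
    using ginj[OF that(1)] that(2) unfolding finv_def g_def by (simp add: inv_into_f_f)
  have Wnz: "Wprod (f i) (w i) k n \<noteq> 0" if "i \<in> {1..N}" "1 \<le> k" for i k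
    by (rule Wprod_nz[where f="f i" and w="w i"]) (use fge wnz smono that in auto)
  have shift: "(pseudo_shift (f i) (w i) ^^ n) z k = Wprod (f i) (w i) k n * z (g i k)"
    if "i \<in> {1..N}" "1 \<le> k" for i k
    unfolding g_def by (rule shift_pow[OF fge[OF that(1)] that(2)])
  have G0: "0 \<le> G" unfolding G_def using N
    by (intro order.trans[OF _ Max_ge[of _ "lp_norm p (x 1)"]]) (auto simp: lp_norm_def)
  have xG: "norm (x i k) \<le> G" if "i \<in> {1..N}" for i k
  proof (cases "k \<in> {1..M}")
    case True
    have "norm (x i k) \<le> lp_norm p (x i)"
      by (rule norm_le_lp[OF p _ _ _ True]) (use xsupp that in auto)
    also have "\<dots> \<le> G" unfolding G_def using that by auto
    finally show ?thesis .
  qed (use xsupp that G0 in auto)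
  have finU: "finite U" unfolding U_def by auto
  have cardU: "card U \<le> N * M"
  proof -
    have "card U \<le> (\<Sum>i\<in>{1..N}. card (g i ` {1..M}))" unfolding U_def by (rule card_UN_le) auto
    also have "\<dots> \<le> (\<Sum>i\<in>{1..N}. M)" by (rule sum_mono) (metis card_atLeastAtMost card_image_le finite_atLeastAtMost diff_Suc_1)
    finally show ?thesis by simp
  qed
  have U1: "U \<subseteq> {1..}" unfolding U_def using gp by fastforce
  have Pj: "Min (P j) \<in> {1..N} \<and> finv (f (Min (P j))) n j \<in> {1..M} \<and>
      g (Min (P j)) (finv (f (Min (P j))) n j) = j \<and>
      (\<forall>i\<in>{1..N}. j \<in> g i ` {1..M} \<longrightarrow> Min (P j) \<le> i)" if "j \<in> U" for j
  proof -
    have ne: "P j \<noteq> {}" "finite (P j)" using that unfolding U_def P_def by auto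
    have mem: "Min (P j) \<in> P j" using Min_in[OF ne(2,1)] .
    then obtain k where k: "k \<in> {1..M}" "j = g (Min (P j)) k" and l: "Min (P j) \<in> {1..N}"
      unfolding P_def by auto
    have "finv (f (Min (P j))) n j = k" using finvg[OF l, of k] k by (metis atLeastAtMost_iff)
    moreover have "\<forall>i\<in>{1..N}. j \<in> g i ` {1..M} \<longrightarrow> Min (P j) \<le> i"
      using ne(2) unfolding P_def by auto
    ultimately show ?thesis using k l by auto
  qed
  define T where "T i = (pseudo_shift (f i) (w i) ^^ n) z" for i
  have y_eq: "T i k - x i k = (if Min (P (g i k)) = i then 0 else
        x (Min (P (g i k))) (finv (f (Min (P (g i k)))) n (g i k)) *
        (Wprod (f i) (w i) (finv (f i) n (g i k)) n / Wprod (f (Min (P (g i k)))) (w (Min (P (g i k)))) (finv (f (Min (P (g i k)))) n (g i k)) n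
         - x i (finv (f i) n (g i k)) / x (Min (P (g i k))) (finv (f (Min (P (g i k)))) n (g i k))))"
    if i: "i \<in> {1..N}" and k: "1 \<le> k" and gU: "g i k \<in> U" for i k
  proof -
    define l where "l = Min (P (g i k))"
    define k' where "k' = finv (f l) n (g i k)"
    have l: "l \<in> {1..N}" and k': "k' \<in> {1..M}" and gk': "g l k' = g i k"
      using Pj[OF gU] unfolding l_def k'_def by auto
    have fi: "finv (f i) n (g i k) = k" using finvg[OF i k] .
    have Wi: "Wprod (f i) (w i) k n \<noteq> 0" using Wnz[OF i k] .
    have Wl: "Wprod (f l) (w l) k' n \<noteq> 0" using Wnz[OF l] k' by auto
    have xl: "x l k' \<noteq> 0" using xnz[OF l k'] .
    have Tk: "T i k = Wprod (f i) (w i) k n * (x l k' / Wprod (f l) (w l) k' n)"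
      unfolding T_def shift[OF i k] z_def l_def k'_def using gU by simp
    show ?thesis
    proof (cases "l = i")
      case True
      then have "k' = k" using gk' ginj[OF i] k k' unfolding inj_on_def by auto
      then show ?thesis using Tk True Wi unfolding l_def[symmetric] by simp
    next
      case False
      then show ?thesis unfolding l_def[symmetric] k'_def[symmetric] fi Tk
        using Wi Wl xl by (simp add: field_simps)
    qed
  qed
  have lmin: "Min (P (g i k)) \<le> i" if "i \<in> {1..N}" "k \<in> {1..M}" for i k
  proof -
    have "g i k \<in> U" using that unfolding U_def by blast
    then show ?thesis using Pj[of "g i k"] that by blast
  qed
  have lne: "Min (P (g i k)) \<noteq> i" if i: "i \<in> {1..N}" "1 \<le> k" "k \<notin> {1..M}" "g i k \<in> U" for i k
  proof
    assume a: "Min (P (g i k)) = i"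
    then have "finv (f i) n (g i k) \<in> {1..M}" using Pj[OF that(4)] by auto
    then show False using finvg[OF that(1,2)] that(3) by simp
  qed
  define S where "S i = {k\<in>{1..}. g i k \<in> U}" for i
  have finS: "finite (S i)" and cardS: "card (S i) \<le> N * M" and S1: "S i \<subseteq> {1..}"
    if "i \<in> {1..N}" for i
  proof -
    have inj: "inj_on (g i) (S i)" using ginj[OF that] unfolding S_def by (rule inj_on_subset) auto
    have sub: "g i ` S i \<subseteq> U" unfolding S_def by auto
    show "finite (S i)" by (rule inj_on_finite[OF inj sub finU])
    show "card (S i) \<le> N * M" using card_inj_on_le[OF inj sub finU] cardU by simp
    show "S i \<subseteq> {1..}" unfolding S_def by auto
  qed
  have outS: "T i k - x i k = 0" if "i \<in> {1..N}" "1 \<le> k" "k \<notin> S i" for i k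
  proof -
    have "g i k \<notin> U" using that unfolding S_def by auto
    moreover have "k \<notin> {1..M}"
    proof
      assume "k \<in> {1..M}"
      then have "g i k \<in> U" unfolding U_def using that(1) by blast
      then show False using \<open>g i k \<notin> U\<close> by simp
    qed
    ultimately show ?thesis unfolding T_def shift[OF that(1,2)] z_def using xsupp[OF that(1)] by simp
  qed
  have finset: "finite {F l j | l j. l \<in> {1..N} \<and> j \<in> U}" for F :: "nat \<Rightarrow> nat \<Rightarrow> real"
    by (rule finite_image_set2) (use finU in auto)
  have gsub: "g l ` {1..M} \<subseteq> U" if "l \<in> {1..N}" for l unfolding U_def using that by auto
  have memU: "j \<in> U" if "l \<in> {1..N}" "j \<in> g l ` {1..M}" for l j using gsub that by blast
  define S0 where "S0 = {inverse (norm (Wprod (f l) (w l) m n)) | l m. l \<in> {1..N} \<and> m \<in> {1..M}}"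
  define B1 where "B1 = {norm (Wprod (f 1) (w 1) (finv (f 1) n j) n / Wprod (f l) (w l) (finv (f l) n j) n) | l j.
              l \<in> {2..N} \<and> j \<in> g l ` {1..M} \<inter> g 1 ` ({1..} - {1..M})}"
  define A where "A i = {norm (Wprod (f i) (w i) (finv (f i) n j) n / Wprod (f l) (w l) (finv (f l) n j) n
                  - x i (finv (f i) n j) / x l (finv (f l) n j)) | l j.
              l \<in> {1..i-1} \<and> j \<in> g l ` {1..M} \<inter> g i ` {1..M}}" for i
  define B where "B i = {norm (Wprod (f i) (w i) (finv (f i) n j) n / Wprod (f l) (w l) (finv (f l) n j) n) | l j.
              l \<in> {1..N} \<and> l \<noteq> i \<and> j \<in> g l ` {1..M} \<inter> g i ` ({1..} - {1..M})}" for i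
  have finS0: "finite S0" unfolding S0_def by (rule finite_image_set2) auto
  have finB1: "finite B1" unfolding B1_def
    by (rule fin_gen2[of "{1..N}", OF _ finU _ _ gsub]) auto
  have finA: "finite (A i)" if "i \<in> {1..N}" for i unfolding A_def
    by (rule fin_gen2[of "{1..N}", OF _ finU _ _ gsub]) (use that in auto)
  have finB: "finite (B i)" for i unfolding B_def
    by (rule fin_gen2[of "{1..N}", OF _ finU _ _ gsub]) auto
  have S00: "0 \<le> Max0 S0" by (rule Max0_nonneg[OF _ finS0]) (auto simp: S0_def)
  have B10: "0 \<le> Max0 B1" by (rule Max0_nonneg[OF _ finB1]) (auto simp: B1_def)
  have A0: "0 \<le> Max0 (A i)" if "i \<in> {1..N}" for i by (rule Max0_nonneg[OF _ finA[OF that]]) (auto simp: A_def)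
  have B0: "0 \<le> Max0 (B i)" for i by (rule Max0_nonneg[OF _ finB]) (auto simp: B_def)
  have zsp: "in_span_basis z"
  proof -
    have "0 \<notin> U" using U1 by auto
    moreover have "{m. z m \<noteq> 0} \<subseteq> U" unfolding z_def by auto
    ultimately show ?thesis unfolding in_span_basis_def z_def using finite_subset finU by auto
  qed
  have zb: "lp_norm p z \<le> real M * real N * G * Max0 S0"
  proof -
    have "lp_norm p z \<le> real (N * M) * (G * Max0 S0)"
    proof (rule lp_bound[OF p finU U1 cardU])
      show "z k = 0" if "1 \<le> k" "k \<notin> U" for k using that unfolding z_def by simp
      show "0 \<le> G * Max0 S0" using G0 S00 by simp
      fix j assume j: "j \<in> U"
      define l where "l = Min (P j)"
      define k' where "k' = finv (f l) n j"
      have l: "l \<in> {1..N}" and k': "k' \<in> {1..M}"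
        using Pj[OF j] unfolding l_def k'_def by auto
      have zj: "z j = x l k' / Wprod (f l) (w l) k' n" unfolding z_def l_def k'_def using j by simp
      have "norm (z j) = norm (x l k') * inverse (norm (Wprod (f l) (w l) k' n))"
        unfolding zj by (simp add: norm_mult norm_inverse divide_inverse)
      also have "\<dots> \<le> G * Max0 S0"
      proof (rule mult_mono)
        show "norm (x l k') \<le> G" by (rule xG[OF l])
        show "inverse (norm (Wprod (f l) (w l) k' n)) \<le> Max0 S0"
          by (rule Max0_ge[OF finS0]) (use l k' in \<open>auto simp: S0_def\<close>)
      qed (use G0 in auto)
      finally show "norm (z j) \<le> G * Max0 S0" .
    qed
    then show ?thesis by (simp add: mult_ac)
  qed
  have e1: "lp_norm p (\<lambda>k. T 1 k - x 1 k) \<le> real M * real N * G * Max0 B1"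
  proof -
    have i1: "(1::nat) \<in> {1..N}" using N by auto
    have "lp_norm p (\<lambda>k. T 1 k - x 1 k) \<le> real (N * M) * (G * Max0 B1)"
    proof (rule lp_bound[OF p finS[OF i1] S1[OF i1] cardS[OF i1]])
      show "T 1 k - x 1 k = 0" if "1 \<le> k" "k \<notin> S 1" for k using outS[OF i1 that] .
      show "0 \<le> G * Max0 B1" using G0 B10 by simp
      fix k assume kS: "k \<in> S 1"
      then have k: "1 \<le> k" and gU: "g 1 k \<in> U" unfolding S_def by auto
      show "norm (T 1 k - x 1 k) \<le> G * Max0 B1"
      proof (cases "k \<in> {1..M}")
        case True
        then have "Min (P (g 1 k)) = 1" using lmin[OF i1 True] Pj[OF gU] by auto
        then show ?thesis using y_eq[OF i1 k gU] G0 B10 by simp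
      next
        case False
        define l where "l = Min (P (g 1 k))"
        define k' where "k' = finv (f l) n (g 1 k)"
        have l: "l \<in> {1..N}" and k': "k' \<in> {1..M}" and gk': "g l k' = g 1 k"
          using Pj[OF gU] unfolding l_def k'_def by auto
        have ln: "l \<noteq> 1" using lne[OF i1 k False gU] unfolding l_def .
        have x0: "x 1 (finv (f 1) n (g 1 k)) = 0" using finvg[OF i1 k] xsupp[OF i1 False] by simp
        have "norm (T 1 k - x 1 k) = norm (x l k') * norm (Wprod (f 1) (w 1) (finv (f 1) n (g 1 k)) n /
             Wprod (f l) (w l) (finv (f l) n (g 1 k)) n)"
          using y_eq[OF i1 k gU] ln x0 unfolding l_def[symmetric] k'_def[symmetric] by (simp add: norm_mult norm_divide)
        also have "\<dots> \<le> G * Max0 B1"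
        proof (rule mult_mono)
          show "norm (x l k') \<le> G" by (rule xG[OF l])
          show "norm (Wprod (f 1) (w 1) (finv (f 1) n (g 1 k)) n /
             Wprod (f l) (w l) (finv (f l) n (g 1 k)) n) \<le> Max0 B1"
          proof (rule Max0_ge[OF finB1])
            have "g 1 k \<in> g l ` {1..M}" using gk' k' by (metis imageI)
            moreover have "g 1 k \<in> g 1 ` ({1..} - {1..M})" using k False by auto
            ultimately show "norm (Wprod (f 1) (w 1) (finv (f 1) n (g 1 k)) n /
             Wprod (f l) (w l) (finv (f l) n (g 1 k)) n) \<in> B1"
              unfolding B1_def using l ln by fastforce
          qed
        qed (use G0 in auto)
        finally show ?thesis .
      qed
    qed
    then show ?thesis by (simp add: mult_ac)
  qed
  have ei: "lp_norm p (\<lambda>k. T i k - x i k) \<le> real M * real N * G * Max0 (A i) + real M * real N * G * Max0 (B i)"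
    if i: "i \<in> {2..N}" for i
  proof -
    have i1: "i \<in> {1..N}" using i by auto
    have "lp_norm p (\<lambda>k. T i k - x i k) \<le> real (N * M) * (G * (Max0 (A i) + Max0 (B i)))"
    proof (rule lp_bound[OF p finS[OF i1] S1[OF i1] cardS[OF i1]])
      show "T i k - x i k = 0" if "1 \<le> k" "k \<notin> S i" for k using outS[OF i1 that] .
      show "0 \<le> G * (Max0 (A i) + Max0 (B i))" using G0 A0[OF i1] B0 by simp
      fix k assume kS: "k \<in> S i"
      then have k: "1 \<le> k" and gU: "g i k \<in> U" unfolding S_def by auto
      define l where "l = Min (P (g i k))"
      define k' where "k' = finv (f l) n (g i k)"
      have l: "l \<in> {1..N}" and k': "k' \<in> {1..M}" and gk': "g l k' = g i k"
        using Pj[OF gU] unfolding l_def k'_def by auto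
      have gl: "g i k \<in> g l ` {1..M}" using gk' k' by (metis imageI)
      show "norm (T i k - x i k) \<le> G * (Max0 (A i) + Max0 (B i))"
      proof (cases "l = i")
        case True
        then show ?thesis using y_eq[OF i1 k gU] G0 A0[OF i1] B0 unfolding l_def by simp
      next
        case ln: False
        show ?thesis
        proof (cases "k \<in> {1..M}")
          case True
          have li: "l < i" using lmin[OF i1 True] ln unfolding l_def by auto
          have "norm (T i k - x i k) = norm (x l k') * norm (Wprod (f i) (w i) (finv (f i) n (g i k)) n /
             Wprod (f l) (w l) (finv (f l) n (g i k)) n - x i (finv (f i) n (g i k)) / x l (finv (f l) n (g i k)))"
            using y_eq[OF i1 k gU] ln unfolding l_def[symmetric] k'_def[symmetric] by (simp add: norm_mult norm_divide)
          also have "\<dots> \<le> G * Max0 (A i)"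
          proof (rule mult_mono)
            show "norm (x l k') \<le> G" by (rule xG[OF l])
            show "norm (Wprod (f i) (w i) (finv (f i) n (g i k)) n /
             Wprod (f l) (w l) (finv (f l) n (g i k)) n - x i (finv (f i) n (g i k)) / x l (finv (f l) n (g i k))) \<le> Max0 (A i)"
            proof (rule Max0_ge[OF finA[OF i1]])
              have "g i k \<in> g i ` {1..M}" using True by auto
              then show "norm (Wprod (f i) (w i) (finv (f i) n (g i k)) n /
               Wprod (f l) (w l) (finv (f l) n (g i k)) n - x i (finv (f i) n (g i k)) / x l (finv (f l) n (g i k))) \<in> A i"
                unfolding A_def using l li gl by fastforce
            qed
          qed (use G0 in auto)
          also have "\<dots> \<le> G * (Max0 (A i) + Max0 (B i))" using G0 B0 by (simp add: mult_left_mono)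
          finally show ?thesis .
        next
          case False
          have x0: "x i (finv (f i) n (g i k)) = 0" using finvg[OF i1 k] xsupp[OF i1 False] by simp
          have "norm (T i k - x i k) = norm (x l k') * norm (Wprod (f i) (w i) (finv (f i) n (g i k)) n /
             Wprod (f l) (w l) (finv (f l) n (g i k)) n)"
            using y_eq[OF i1 k gU] ln x0 unfolding l_def[symmetric] k'_def[symmetric] by (simp add: norm_mult norm_divide)
          also have "\<dots> \<le> G * Max0 (B i)"
          proof (rule mult_mono)
            show "norm (x l k') \<le> G" by (rule xG[OF l])
            show "norm (Wprod (f i) (w i) (finv (f i) n (g i k)) n /
             Wprod (f l) (w l) (finv (f l) n (g i k)) n) \<le> Max0 (B i)"
            proof (rule Max0_ge[OF finB])
              have "g i k \<in> g i ` ({1..} - {1..M})" using k False by auto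
              then show "norm (Wprod (f i) (w i) (finv (f i) n (g i k)) n /
               Wprod (f l) (w l) (finv (f l) n (g i k)) n) \<in> B i"
                unfolding B_def using l ln gl by fastforce
            qed
          qed (use G0 in auto)
          also have "\<dots> \<le> G * (Max0 (A i) + Max0 (B i))" using G0 A0[OF i1] by (simp add: mult_left_mono)
          finally show ?thesis .
        qed
      qed
    qed
    then show ?thesis by (simp add: algebra_simps)
  qed
  show ?thesis
    unfolding G_def[symmetric] g_def[symmetric] S0_def[symmetric] B1_def[symmetric]
      A_def[symmetric] B_def[symmetric]
    apply (rule exI[of _ z])
    using zsp zb e1[unfolded T_def] ei[unfolded T_def] by blast
qed

end
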